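(* For all graphs $H$ and $\Gamma$, we have $$\mathrm{ex}(\Gamma,\mathcal{P}_H)\ \ge\ \frac{1}{2}\,e(\Gamma)\,\mathrm{ex}(\chi(\overline{\Gamma}),\mathcal{F}_H)\Big/\binom{\chi(\overline{\Gamma})}{2}.$$
   Context: $\mathcal{P}_H$ is the property of not containing $H$ as an induced subgraph; $\mathrm{ex}(\Gamma,\mathcal{P})$ is the maximum number of edges of a subgraph $G\subseteq\Gamma$ that belongs to $\mathcal{P}$. For a family $\mathcal{F}$ of graphs, $\mathrm{ex}(k,\mathcal{F})$ is the maximum number of edges in a $k$-vertex graph containing no member of $\mathcal{F}$ as a subgraph. For a vertex partition $V(H)=V_1\sqcup\dots\sqcup V_k$ into cliques of $H$, the clique quotient is the graph on $\{1,\dots,k\}$ in which $i\ne j$ are adjacent if some vertex of $V_i$ is adjacent to some vertex of $V_j$; $\mathcal{F}_H$ is the family of bipartite graphs that are clique quotients of $H$. $\overline{\Gamma}$ is the complement of $\Gamma$ and $\chi$ denotes chromatic number. *)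

theory Defs
  imports Complex_Main
begin

type_synonym 'a graph = "'a set \<times> 'a set set"

abbreviation verts :: "'a graph \<Rightarrow> 'a set" where "verts G \<equiv> fst G"
abbreviation edges :: "'a graph \<Rightarrow> 'a set set" where "edges G \<equiv> snd G"

definition graph :: "'a graph \<Rightarrow> bool" where
  "graph G \<longleftrightarrow> finite (verts G) \<and> (\<forall>e\<in>edges G. e \<subseteq> verts G \<and> card e = 2)"

definition num_edges :: "'a graph \<Rightarrow> nat" where
  "num_edges G = card (edges G)"

definition complement :: "'a graph \<Rightarrow> 'a graph" where
  "complement G = (verts G,
     {{u, v} | u v. u \<in> verts G \<and> v \<in> verts G \<and> u \<noteq> v \<and> {u, v} \<notin> edges G})"

definition proper_colouring :: "'a graph \<Rightarrow> ('a \<Rightarrow> 'c) \<Rightarrow> bool" where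
  "proper_colouring G c \<longleftrightarrow>
     (\<forall>u\<in>verts G. \<forall>v\<in>verts G. {u, v} \<in> edges G \<longrightarrow> c u \<noteq> c v)"

definition chromatic_number :: "'a graph \<Rightarrow> nat" where
  "chromatic_number G =
     (LEAST k. \<exists>c :: 'a \<Rightarrow> nat. proper_colouring G c \<and> (\<forall>v\<in>verts G. c v < k))"

definition bipartite :: "'a graph \<Rightarrow> bool" where
  "bipartite G \<longleftrightarrow> (\<exists>c :: 'a \<Rightarrow> bool. proper_colouring G c)"

definition contains_subgraph :: "'b graph \<Rightarrow> 'a graph \<Rightarrow> bool" where
  "contains_subgraph G H \<longleftrightarrow>
     (\<exists>f. inj_on f (verts H) \<and> f ` verts H \<subseteq> verts G \<and>
          (\<forall>u\<in>verts H. \<forall>v\<in>verts H. {u, v} \<in> edges H \<longrightarrow> {f u, f v} \<in> edges G))"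

definition contains_induced :: "'b graph \<Rightarrow> 'a graph \<Rightarrow> bool" where
  "contains_induced G H \<longleftrightarrow>
     (\<exists>f. inj_on f (verts H) \<and> f ` verts H \<subseteq> verts G \<and>
          (\<forall>u\<in>verts H. \<forall>v\<in>verts H. {u, v} \<in> edges H \<longleftrightarrow> {f u, f v} \<in> edges G))"

definition P_ind_free :: "'a graph \<Rightarrow> 'b graph \<Rightarrow> bool" where
  "P_ind_free H G \<longleftrightarrow> \<not> contains_induced G H"

definition subgraph_of :: "'a graph \<Rightarrow> 'a graph \<Rightarrow> bool" where
  "subgraph_of G \<Gamma> \<longleftrightarrow> verts G = verts \<Gamma> \<and> edges G \<subseteq> edges \<Gamma>"

text \<open>ex(\<Gamma>, P): maximum number of edges of a subgraph of \<Gamma> with property P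
  (Sup over nat, so 0 if no such subgraph exists).\<close>
definition ex_prop :: "'a graph \<Rightarrow> ('a graph \<Rightarrow> bool) \<Rightarrow> nat" where
  "ex_prop \<Gamma> P = Sup {num_edges G | G. graph G \<and> subgraph_of G \<Gamma> \<and> P G}"

text \<open>ex(k, F): maximum number of edges of a k-vertex graph (vertex set {1..k})
  containing no member of F as a subgraph (0 if there is none).\<close>
definition ex_fam :: "nat \<Rightarrow> 'b graph set \<Rightarrow> nat" where
  "ex_fam k F = Sup {num_edges G | G :: nat graph. graph G \<and> verts G = {1..k} \<and>
                       (\<forall>F'\<in>F. \<not> contains_subgraph G F')}"

text \<open>A partition of V(H) into k nonempty cliques V_1,...,V_k, encoded by the map
  p sending a vertex to the index of its part.\<close>
definition clique_partition :: "'a graph \<Rightarrow> nat \<Rightarrow> ('a \<Rightarrow> nat) \<Rightarrow> bool" where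
  "clique_partition H k p \<longleftrightarrow> p ` verts H = {1..k} \<and>
     (\<forall>u\<in>verts H. \<forall>v\<in>verts H. u \<noteq> v \<and> p u = p v \<longrightarrow> {u, v} \<in> edges H)"

definition clique_quotient :: "'a graph \<Rightarrow> nat \<Rightarrow> ('a \<Rightarrow> nat) \<Rightarrow> nat graph" where
  "clique_quotient H k p = ({1..k},
     {{i, j} | i j. i \<noteq> j \<and> (\<exists>u\<in>verts H. \<exists>v\<in>verts H. p u = i \<and> p v = j \<and> {u, v} \<in> edges H)})"

definition F_fam :: "'a graph \<Rightarrow> nat graph set" where
  "F_fam H = {Q. \<exists>k p. clique_partition H k p \<and> Q = clique_quotient H k p \<and> bipartite Q}"

end

theory Submission
  imports Defs "HOL-Combinatorics.Permutations"
begin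


definition cutE :: "('a \<Rightarrow> bool) \<Rightarrow> 'a set set \<Rightarrow> 'a set set" where
  "cutE c E = {e\<in>E. \<exists>x\<in>e. \<exists>y\<in>e. c x \<noteq> c y}"

lemma max_cut:
  assumes "finite V" "\<forall>e\<in>E. e \<subseteq> V \<and> card e = 2"
  shows "\<exists>c::'a\<Rightarrow>bool. card E \<le> 2 * card (cutE c E)"
  using assms
proof (induction V arbitrary: E rule: finite_induct)
  case empty
  hence "E = {}" by fastforce
  thus ?case by simp
next
  case (insert v W)
  have finE: "finite E"
    by (rule finite_subset[of E "Pow (insert v W)"]) (use insert in auto)
  define E0 where "E0 = {e\<in>E. v \<notin> e}"
  define E1 where "E1 = {e\<in>E. v \<in> e}"
  have "\<forall>e\<in>E0. e \<subseteq> W \<and> card e = 2" using insert.prems unfolding E0_def by blast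
  then obtain c where c: "card E0 \<le> 2 * card (cutE c E0)" using insert.IH by blast
  define c1 where "c1 = c(v := True)"
  define c2 where "c2 = c(v := False)"
  have same0: "cutE (c(v:=b)) E0 = cutE c E0" for b
  proof -
    have "(\<exists>x\<in>e. \<exists>y\<in>e. (c(v:=b)) x \<noteq> (c(v:=b)) y) \<longleftrightarrow> (\<exists>x\<in>e. \<exists>y\<in>e. c x \<noteq> c y)"
      if "e \<in> E0" for e
    proof -
      have "\<forall>x\<in>e. (c(v:=b)) x = c x" using that unfolding E0_def by auto
      thus ?thesis by metis
    qed
    thus ?thesis unfolding cutE_def by blast
  qed
  have same: "cutE c1 E0 = cutE c E0" "cutE c2 E0 = cutE c E0"
    unfolding c1_def c2_def using same0 by auto
  have fin01: "finite E0" "finite E1" using finE unfolding E0_def E1_def by auto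
  have split: "cutE d E = cutE d E0 \<union> cutE d E1" "cutE d E0 \<inter> cutE d E1 = {}" for d
    unfolding cutE_def E0_def E1_def by auto
  have fincut: "finite (cutE d E0)" "finite (cutE d E1)" for d
    using fin01 unfolding cutE_def by auto
  have cardsplit: "card (cutE d E) = card (cutE d E0) + card (cutE d E1)" for d
  proof -
    have "card (cutE d E0 \<union> cutE d E1) = card (cutE d E0) + card (cutE d E1)"
      by (rule card_Un_disjoint) (use fincut split(2) in auto)
    thus ?thesis using split(1)[of d] by simp
  qed
  have E01: "E = E0 \<union> E1" "E0 \<inter> E1 = {}" unfolding E0_def E1_def by auto
  have cE: "card E = card E0 + card E1"
    using card_Un_disjoint[OF fin01 E01(2)] E01(1) by simp
  have comp: "cutE c1 E1 \<union> cutE c2 E1 = E1" "cutE c1 E1 \<inter> cutE c2 E1 = {}"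
  proof -
    have key: "e \<in> cutE c1 E1 \<longleftrightarrow> e \<notin> cutE c2 E1" if e: "e \<in> E1" for e
    proof -
      have "v \<in> e" "card e = 2" using e insert.prems unfolding E1_def by auto
      then obtain w where w: "e = {v, w}" "w \<noteq> v"
        by (metis card_2_iff doubleton_eq_iff insertE singletonD)
      show ?thesis using e w unfolding cutE_def c1_def c2_def by auto
    qed
    show "cutE c1 E1 \<union> cutE c2 E1 = E1" using key unfolding cutE_def by blast
    show "cutE c1 E1 \<inter> cutE c2 E1 = {}" using key unfolding cutE_def by blast
  qed
  have "card (cutE c1 E1) + card (cutE c2 E1) = card E1"
    using comp card_Un_disjoint[OF fincut(2) fincut(2) comp(2)] by simp
  hence "card E1 \<le> 2 * card (cutE c1 E1) \<or> card E1 \<le> 2 * card (cutE c2 E1)" by linarith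
  thus ?case
  proof
    assume "card E1 \<le> 2 * card (cutE c1 E1)"
    hence "card E \<le> 2 * card (cutE c1 E)" using cE cardsplit[of c1] arg_cong[OF same(1), of card] c by linarith
    thus ?case by blast
  next
    assume "card E1 \<le> 2 * card (cutE c2 E1)"
    hence "card E \<le> 2 * card (cutE c2 E)" using cE cardsplit[of c2] arg_cong[OF same(2), of card] c by linarith
    thus ?case by blast
  qed
qed



lemma perm_transitive:
  assumes "finite T" "A \<subseteq> T" "B \<subseteq> T" "card A = card B"
  shows "\<exists>\<tau>. \<tau> permutes T \<and> \<tau> ` A = B"
proof -
  have fA: "finite A" "finite B" using assms finite_subset by auto
  obtain f where f: "bij_betw f A B" using finite_same_card_bij fA assms(4) by blast
  have "card (T - A) = card (T - B)" using assms fA by (simp add: card_Diff_subset)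
  then obtain g where g: "bij_betw g (T - A) (T - B)"
    using finite_same_card_bij assms(1) by (metis finite_Diff)
  define \<tau> where "\<tau> x = (if x \<in> A then f x else if x \<in> T then g x else x)" for x
  have f': "bij_betw \<tau> A B" using f by (rule bij_betw_cong[THEN iffD1, rotated]) (simp add: \<tau>_def)
  have g': "bij_betw \<tau> (T - A) (T - B)" using g by (rule bij_betw_cong[THEN iffD1, rotated]) (simp add: \<tau>_def)
  have "bij_betw \<tau> (A \<union> (T - A)) (B \<union> (T - B))"
    by (rule bij_betw_combine[OF f' g']) auto
  moreover have "A \<union> (T - A) = T" "B \<union> (T - B) = T" using assms by auto
  ultimately have "bij_betw \<tau> T T" by simp
  hence "\<tau> permutes T" by (rule bij_imp_permutes) (use assms in \<open>auto simp: \<tau>_def\<close>)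
  moreover have "\<tau> ` A = B" using f' by (simp add: bij_betw_def)
  ultimately show ?thesis by blast
qed

lemma perm_count:
  assumes T: "finite T" and A: "A \<subseteq> T" and Eb: "Eb \<subseteq> {B. B \<subseteq> T \<and> card B = card A}"
  shows "card {\<sigma>. \<sigma> permutes T \<and> \<sigma> ` A \<in> Eb} * (card T choose card A) = card Eb * fact (card T)"
proof -
  define P where "P = {\<sigma>. \<sigma> permutes T}"
  define S where "S = {B. B \<subseteq> T \<and> card B = card A}"
  define N where "N B = card {\<sigma>\<in>P. \<sigma> ` A = B}" for B
  have finP: "finite P" unfolding P_def using finite_permutations T by blast
  have finS: "finite S" unfolding S_def using T by simp
  have le: "N B \<le> N B'" if BS: "B \<in> S" "B' \<in> S" for B B'
  proof -
    obtain \<tau> where \<tau>: "\<tau> permutes T" "\<tau> ` B = B'"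
      using perm_transitive[OF T, of B B'] BS unfolding S_def by auto
    have "inj_on ((\<circ>) \<tau>) {\<sigma>\<in>P. \<sigma> ` A = B}"
    proof (rule inj_onI)
      fix s1 s2 assume "\<tau> \<circ> s1 = \<tau> \<circ> s2"
      hence "\<tau> (s1 x) = \<tau> (s2 x)" for x by (metis comp_apply)
      thus "s1 = s2" using permutes_inj[OF \<tau>(1)] by (simp add: inj_eq fun_eq_iff)
    qed
    moreover have "((\<circ>) \<tau>) ` {\<sigma>\<in>P. \<sigma> ` A = B} \<subseteq> {\<sigma>\<in>P. \<sigma> ` A = B'}"
    proof
      fix x assume "x \<in> ((\<circ>) \<tau>) ` {\<sigma>\<in>P. \<sigma> ` A = B}"
      then obtain \<sigma> where s: "\<sigma> \<in> P" "\<sigma> ` A = B" "x = \<tau> \<circ> \<sigma>" by blast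
      have "x \<in> P" using s permutes_compose[of \<sigma> T \<tau>] \<tau>(1) unfolding P_def by simp
      moreover have "x ` A = B'" using s \<tau>(2) by (metis image_comp)
      ultimately show "x \<in> {\<sigma>\<in>P. \<sigma> ` A = B'}" by simp
    qed
    ultimately show ?thesis unfolding N_def
      by (rule card_inj_on_le) (use finP in auto)
  qed
  have eq: "N B = N A" if "B \<in> S" for B
  proof -
    have "A \<in> S" using A unfolding S_def by simp
    thus ?thesis using le[OF that \<open>A \<in> S\<close>] le[OF \<open>A \<in> S\<close> that] by simp
  qed
  have img: "\<sigma> ` A \<in> S" if "\<sigma> \<in> P" for \<sigma>
  proof -
    have p: "\<sigma> permutes T" using that unfolding P_def by simp
    have "\<sigma> ` A \<subseteq> T" using permutes_image[OF p] A by blast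
    moreover have "card (\<sigma> ` A) = card A"
      using card_image permutes_inj[OF p] by (metis inj_on_subset subset_UNIV)
    ultimately show ?thesis unfolding S_def by simp
  qed
  have union: "{\<sigma>\<in>P. \<sigma> ` A \<in> X} = (\<Union>B\<in>X. {\<sigma>\<in>P. \<sigma> ` A = B})" for X by auto
  have cardU: "card {\<sigma>\<in>P. \<sigma> ` A \<in> X} = card X * N A" if "X \<subseteq> S" for X
  proof -
    have "card {\<sigma>\<in>P. \<sigma> ` A \<in> X} = (\<Sum>B\<in>X. N B)" unfolding union N_def
    proof (rule card_UN_disjoint)
      show "finite X" using that finS by (rule finite_subset)
      show "\<forall>i\<in>X. finite {\<sigma> \<in> P. \<sigma> ` A = i}" using finP by simp
      show "\<forall>i\<in>X. \<forall>j\<in>X. i \<noteq> j \<longrightarrow> {\<sigma> \<in> P. \<sigma> ` A = i} \<inter> {\<sigma> \<in> P. \<sigma> ` A = j} = {}" by blast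
    qed
    also have "\<dots> = (\<Sum>B\<in>X. N A)" using eq that by (intro sum.cong) auto
    finally show ?thesis by simp
  qed
  have "card P = card S * N A"
  proof -
    have "{\<sigma>\<in>P. \<sigma> ` A \<in> S} = P" using img by blast
    thus ?thesis using cardU[of S] by simp
  qed
  hence "fact (card T) = (card T choose card A) * N A"
    unfolding P_def S_def using card_permutations[OF refl T] n_subsets[OF T] by simp
  moreover have "card {\<sigma>. \<sigma> permutes T \<and> \<sigma> ` A \<in> Eb} = card Eb * N A"
    using cardU[of Eb] Eb unfolding S_def P_def by simp
  ultimately show ?thesis by simp
qed



lemma indfree:
  fixes H :: "'a graph" and \<Gamma> :: "'b graph" and G :: "nat graph" and c :: "'b \<Rightarrow> nat"
  assumes colour: "\<forall>u\<in>verts \<Gamma>. \<forall>v\<in>verts \<Gamma>. u \<noteq> v \<and> c u = c v \<longrightarrow> {u,v} \<in> edges \<Gamma>"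
    and cV: "\<forall>v\<in>verts \<Gamma>. c v \<in> verts G"
    and \<sigma>: "\<sigma> permutes verts G" and finG: "finite (verts G)"
    and GF: "\<forall>F'\<in>F_fam H. \<not> contains_subgraph G F'"
    and Eb: "Eb = cutE cb (edges G)"
  shows "P_ind_free H (verts \<Gamma>, {e\<in>edges \<Gamma>. card (c`e) \<noteq> 2 \<or> \<sigma>`(c`e) \<in> Eb})"
  unfolding P_ind_free_def
proof
  let ?E' = "{e\<in>edges \<Gamma>. card (c`e) \<noteq> 2 \<or> \<sigma>`(c`e) \<in> Eb}"
  assume "contains_induced (verts \<Gamma>, ?E') H"
  then obtain f where f: "inj_on f (verts H)" "f ` verts H \<subseteq> verts \<Gamma>"
    "\<And>u v. u\<in>verts H \<Longrightarrow> v\<in>verts H \<Longrightarrow> {u, v} \<in> edges H \<longleftrightarrow> {f u, f v} \<in> ?E'"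
    unfolding contains_induced_def by auto
  define h where "h u = \<sigma> (c (f u))" for u
  define U where "U = h ` verts H"
  have UT: "U \<subseteq> verts G"
    using f(2) cV permutes_image[OF \<sigma>] unfolding U_def h_def by blast
  have finU: "finite U" using UT finG finite_subset by blast
  obtain r0 where r0: "bij_betw r0 U {0..<card U}" using ex_bij_betw_finite_nat[OF finU] by blast
  define r where "r x = Suc (r0 x)" for x
  define mq where "mq = card U"
  have rbij: "bij_betw r U {1..mq}"
  proof -
    have "bij_betw Suc {0..<card U} {1..mq}"
      unfolding mq_def by (simp add: bij_betw_def image_Suc_atLeastLessThan atLeastLessThanSuc_atLeastAtMost)
    from bij_betw_trans[OF r0 this] show ?thesis unfolding r_def comp_def by simp
  qed
  define g where "g = inv_into U r"
  have gbij: "bij_betw g {1..mq} U" unfolding g_def by (rule bij_betw_inv_into[OF rbij])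
  have gr: "g (r x) = x" if "x \<in> U" for x
    unfolding g_def using bij_betw_inv_into_left[OF rbij that] .
  define p where "p u = r (h u)" for u
  have gp: "g (p u) = h u" if "u \<in> verts H" for u
    unfolding p_def using gr that U_def by blast
  have injc: "c x = c y" if "\<sigma> (c x) = \<sigma> (c y)" for x y
    using permutes_inj[OF \<sigma>] that by (simp add: inj_eq)
  have cp: "clique_partition H mq p"
    unfolding clique_partition_def
  proof
    show "p ` verts H = {1..mq}"
    proof -
      have "p ` verts H = r ` U" unfolding p_def U_def by (simp add: image_image)
      thus ?thesis using rbij unfolding bij_betw_def by simp
    qed
    show "\<forall>u\<in>verts H. \<forall>v\<in>verts H. u \<noteq> v \<and> p u = p v \<longrightarrow> {u, v} \<in> edges H"
    proof (intro ballI impI)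
      fix u v assume uv: "u \<in> verts H" "v \<in> verts H" "u \<noteq> v \<and> p u = p v"
      have "h u = h v" using gp uv by metis
      hence ceq: "c (f u) = c (f v)" unfolding h_def using injc by blast
      have fne: "f u \<noteq> f v" using f(1) uv inj_on_eq_iff by metis
      have fin: "f u \<in> verts \<Gamma>" "f v \<in> verts \<Gamma>" using f(2) uv by auto
      have "{f u, f v} \<in> edges \<Gamma>" using colour fin fne ceq by blast
      moreover have "card (c ` {f u, f v}) \<noteq> 2" using ceq by simp
      ultimately have "{f u, f v} \<in> ?E'" by blast
      thus "{u, v} \<in> edges H" using f(3) uv by blast
    qed
  qed
  define Q where "Q = clique_quotient H mq p"
  have QE: "g ` e \<in> Eb" if e: "e \<in> edges Q" for e
  proof -
    obtain i j u v where ij: "e = {i, j}" "i \<noteq> j" "u \<in> verts H" "v \<in> verts H"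
      "p u = i" "p v = j" "{u, v} \<in> edges H"
      using e unfolding Q_def clique_quotient_def by auto
    have "{f u, f v} \<in> ?E'" using f(3) ij by blast
    moreover have "c (f u) \<noteq> c (f v)" using ij unfolding p_def h_def by metis
    ultimately have "\<sigma> ` (c ` {f u, f v}) \<in> Eb" by simp
    moreover have "\<sigma> ` (c ` {f u, f v}) = g ` e"
      using ij gp unfolding h_def by auto
    ultimately show ?thesis by simp
  qed
  have EbG: "Eb \<subseteq> edges G" unfolding Eb cutE_def by blast
  have bip: "bipartite Q"
    unfolding bipartite_def proper_colouring_def
  proof (intro exI ballI impI)
    fix i j assume "{i, j} \<in> edges Q"
    hence "g ` {i, j} \<in> cutE cb (edges G)" using QE Eb by blast
    thus "cb (g i) \<noteq> cb (g j)" unfolding cutE_def by auto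
  qed
  have QF: "Q \<in> F_fam H" unfolding F_fam_def using cp bip Q_def by blast
  have "contains_subgraph G Q"
    unfolding contains_subgraph_def
  proof (intro exI conjI ballI impI)
    show "inj_on g (verts Q)" using gbij unfolding Q_def clique_quotient_def bij_betw_def by simp
    show "g ` verts Q \<subseteq> verts G" using gbij UT unfolding Q_def clique_quotient_def bij_betw_def by simp
    fix i j assume "i \<in> verts Q" "j \<in> verts Q" "{i, j} \<in> edges Q"
    hence "g ` {i, j} \<in> Eb" using QE by blast
    thus "{g i, g j} \<in> edges G" using EbG by auto
  qed
  moreover have "\<not> contains_subgraph G Q" using bspec[OF GF QF] .
  ultimately show False by contradiction
qed



lemma card_filter_sum: "finite A \<Longrightarrow> card {x\<in>A. P x} = (\<Sum>x\<in>A. if P x then 1 else 0 :: nat)"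
  by (simp add: sum.inter_filter[symmetric])

theorem corollary2p4:
  fixes H :: "'a graph" and \<Gamma> :: "'b graph"
  assumes "graph H" and "graph \<Gamma>"
  shows "real (ex_prop \<Gamma> (P_ind_free H)) \<ge>
           (1/2) * real (num_edges \<Gamma>)
             * real (ex_fam (chromatic_number (complement \<Gamma>)) (F_fam H))
             / real (chromatic_number (complement \<Gamma>) choose 2)"
proof -
  define k where "k = chromatic_number (complement \<Gamma>)"
  define m where "m = ex_fam k (F_fam H)"
  define V where "V = verts \<Gamma>"
  define E\<Gamma> where "E\<Gamma> = edges \<Gamma>"
  have finV: "finite V" using assms(2) unfolding graph_def V_def by simp
  have E\<Gamma>: "\<forall>e\<in>E\<Gamma>. e \<subseteq> V \<and> card e = 2" using assms(2) unfolding graph_def V_def E\<Gamma>_def by simp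
  have finE: "finite E\<Gamma>" using E\<Gamma> finV by (meson Pow_iff finite_Pow_iff finite_subset subsetI)
  show ?thesis
  proof (cases "k < 2 \<or> m = 0")
    case True
    show ?thesis
    proof (cases "k < 2")
      case True
      hence z: "k choose 2 = 0" by (simp add: binomial_eq_0)
      show ?thesis unfolding k_def[symmetric] m_def[symmetric] z by simp
    next
      case False
      hence z: "m = 0" using \<open>k < 2 \<or> m = 0\<close> by simp
      show ?thesis unfolding k_def[symmetric] m_def[symmetric] z by simp
    qed
  next
    case False
    hence k2: "k \<ge> 2" and m0: "m > 0" by auto
    define C where "C = k choose 2"
    have C0: "C > 0" unfolding C_def using k2 by simp
    have "\<exists>c :: 'b \<Rightarrow> nat. proper_colouring (complement \<Gamma>) c \<and> (\<forall>v\<in>verts (complement \<Gamma>). c v < card V)"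
    proof -
      obtain h where h: "bij_betw h V {0..<card V}" using ex_bij_betw_finite_nat[OF finV] by blast
      have "proper_colouring (complement \<Gamma>) h"
        unfolding proper_colouring_def
      proof (intro ballI impI)
        fix u v assume uv: "u \<in> verts (complement \<Gamma>)" "v \<in> verts (complement \<Gamma>)" "{u, v} \<in> edges (complement \<Gamma>)"
        have "u \<noteq> v" using uv(3) unfolding complement_def
          by (auto simp: doubleton_eq_iff)
        moreover have "u \<in> V" "v \<in> V" using uv unfolding complement_def V_def by auto
        ultimately show "h u \<noteq> h v" using h unfolding bij_betw_def inj_on_def by blast
      qed
      moreover have "\<forall>v\<in>verts (complement \<Gamma>). h v < card V"
        using h unfolding complement_def V_def bij_betw_def by auto
      ultimately show ?thesis by blast
    qed
    hence "\<exists>kk. \<exists>c :: 'b \<Rightarrow> nat. proper_colouring (complement \<Gamma>) c \<and> (\<forall>v\<in>verts (complement \<Gamma>). c v < kk)"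
      by blast
    hence "\<exists>c :: 'b \<Rightarrow> nat. proper_colouring (complement \<Gamma>) c \<and> (\<forall>v\<in>verts (complement \<Gamma>). c v < k)"
      unfolding k_def chromatic_number_def by (rule LeastI_ex)
    moreover have "verts (complement \<Gamma>) = V" unfolding complement_def V_def by simp
    ultimately obtain c :: "'b \<Rightarrow> nat" where c: "proper_colouring (complement \<Gamma>) c" "\<forall>v\<in>V. c v < k"
      by auto
    have colour: "\<forall>u\<in>V. \<forall>v\<in>V. u \<noteq> v \<and> c u = c v \<longrightarrow> {u,v} \<in> E\<Gamma>"
    proof (intro ballI impI)
      fix u v assume uv: "u \<in> V" "v \<in> V" "u \<noteq> v \<and> c u = c v"
      show "{u, v} \<in> E\<Gamma>"
      proof (rule ccontr)
        assume "{u, v} \<notin> E\<Gamma>"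
        hence "{u, v} \<in> edges (complement \<Gamma>)" using uv unfolding complement_def V_def E\<Gamma>_def by auto
        moreover have "u \<in> verts (complement \<Gamma>)" "v \<in> verts (complement \<Gamma>)"
          using uv unfolding complement_def V_def by auto
        ultimately show False using c(1) uv unfolding proper_colouring_def by blast
      qed
    qed
    define c' where "c' v = Suc (c v)" for v
    define T where "T = {1..k}"
    have finT: "finite T" and cardT: "card T = k" unfolding T_def by auto
    have c'T: "\<forall>v\<in>V. c' v \<in> T" using c(2) unfolding c'_def T_def by auto
    have colour': "\<forall>u\<in>V. \<forall>v\<in>V. u \<noteq> v \<and> c' u = c' v \<longrightarrow> {u,v} \<in> E\<Gamma>"
      using colour unfolding c'_def by auto
    define SF where "SF = {num_edges G | G :: nat graph. graph G \<and> verts G = {1..k} \<and>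
                       (\<forall>F'\<in>F_fam H. \<not> contains_subgraph G F')}"
    have mSF: "m = Sup SF" unfolding m_def ex_fam_def SF_def by simp
    have "SF \<subseteq> {..card (Pow {1..k})}"
    proof
      fix x assume "x \<in> SF"
      then obtain G :: "nat graph" where G: "x = num_edges G" "graph G" "verts G = {1..k}"
        unfolding SF_def by blast
      have "edges G \<subseteq> Pow {1..k}" using G unfolding graph_def by auto
      hence "card (edges G) \<le> card (Pow {1..k})" by (rule card_mono[rotated]) simp
      thus "x \<in> {..card (Pow {1..k})}" using G unfolding num_edges_def by simp
    qed
    hence finSF: "finite SF" by (rule finite_subset) simp
    have "SF \<noteq> {}" using m0 mSF by auto
    hence "m \<in> SF" using mSF finSF cSup_eq_Max Max_in by metis
    then obtain G :: "nat graph" where G: "m = num_edges G" "graph G" "verts G = T"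
        "\<forall>F'\<in>F_fam H. \<not> contains_subgraph G F'"
      unfolding SF_def T_def by blast
    have EG: "\<forall>e\<in>edges G. e \<subseteq> T \<and> card e = 2" using G(2,3) unfolding graph_def by auto
    obtain cb :: "nat \<Rightarrow> bool" where cb: "card (edges G) \<le> 2 * card (cutE cb (edges G))"
      using max_cut[OF finT EG] by blast
    define Eb where "Eb = cutE cb (edges G)"
    define eb where "eb = card Eb"
    have m_eb: "m \<le> 2 * eb" using cb G(1) unfolding eb_def Eb_def num_edges_def by simp
    have EbS: "Eb \<subseteq> {B. B \<subseteq> T \<and> card B = 2}" using EG unfolding Eb_def cutE_def by auto
    have ebC: "eb \<le> C"
    proof -
      have "eb \<le> card {B. B \<subseteq> T \<and> card B = 2}" unfolding eb_def
        by (rule card_mono[OF _ EbS]) (simp add: finT)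
      thus ?thesis using n_subsets[OF finT] cardT unfolding C_def by simp
    qed
    define Ec where "Ec = {e\<in>E\<Gamma>. card (c'`e) = 2}"
    define Ew where "Ew = {e\<in>E\<Gamma>. card (c'`e) \<noteq> 2}"
    define P where "P = {\<sigma>. \<sigma> permutes T}"
    define K where "K \<sigma> = {e\<in>Ec. \<sigma> ` (c' ` e) \<in> Eb}" for \<sigma>
    have finP: "finite P" unfolding P_def using finite_permutations finT by blast
    have cardP: "card P = fact k" unfolding P_def using card_permutations[OF cardT finT] .
    have finEc: "finite Ec" using finE unfolding Ec_def by simp
    have per_edge: "card {\<sigma>\<in>P. \<sigma> ` (c' ` e) \<in> Eb} * C = eb * fact k" if e: "e \<in> Ec" for e
    proof -
      have "c' ` e \<subseteq> T" using e E\<Gamma> c'T unfolding Ec_def by blast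
      moreover have "card (c' ` e) = 2" using e unfolding Ec_def by simp
      ultimately show ?thesis using perm_count[OF finT, of "c' ` e" Eb] EbS cardT
        unfolding P_def C_def eb_def by simp
    qed
    have "(\<Sum>\<sigma>\<in>P. card (K \<sigma>)) = (\<Sum>\<sigma>\<in>P. \<Sum>e\<in>Ec. if \<sigma> ` (c' ` e) \<in> Eb then 1 else 0)"
      unfolding K_def using card_filter_sum[OF finEc] by simp
    also have "\<dots> = (\<Sum>e\<in>Ec. \<Sum>\<sigma>\<in>P. if \<sigma> ` (c' ` e) \<in> Eb then 1 else 0)" by (rule sum.swap)
    also have "\<dots> = (\<Sum>e\<in>Ec. card {\<sigma>\<in>P. \<sigma> ` (c' ` e) \<in> Eb})"
      using card_filter_sum[OF finP] by simp
    finally have sumK: "(\<Sum>\<sigma>\<in>P. card (K \<sigma>)) * C = (\<Sum>e\<in>Ec. card {\<sigma>\<in>P. \<sigma> ` (c' ` e) \<in> Eb} * C)"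
      by (simp add: sum_distrib_right)
    also have "\<dots> = (\<Sum>e\<in>Ec. eb * fact k)" using per_edge by (intro sum.cong) auto
    finally have sumK2: "(\<Sum>\<sigma>\<in>P. card (K \<sigma>) * C) = card Ec * eb * fact k"
      by (simp add: sum_distrib_right)
    have "\<exists>\<sigma>\<in>P. card Ec * eb \<le> card (K \<sigma>) * C"
    proof (rule ccontr)
      assume "\<not> ?thesis"
      hence lt: "\<And>\<sigma>. \<sigma> \<in> P \<Longrightarrow> card (K \<sigma>) * C < card Ec * eb" by auto
      have "P \<noteq> {}" unfolding P_def using permutes_id by blast
      hence "(\<Sum>\<sigma>\<in>P. card (K \<sigma>) * C) < (\<Sum>\<sigma>\<in>P. card Ec * eb)"
        by (rule sum_strict_mono[OF finP _ lt])
      also have "\<dots> = card Ec * eb * fact k" using cardP by simp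
      finally show False using sumK2 by simp
    qed
    then obtain \<sigma> where \<sigma>P: "\<sigma> \<in> P" and K\<sigma>: "card Ec * eb \<le> card (K \<sigma>) * C" by blast
    have \<sigma>: "\<sigma> permutes T" using \<sigma>P unfolding P_def by simp
    define E' where "E' = {e\<in>E\<Gamma>. card (c'`e) \<noteq> 2 \<or> \<sigma>`(c'`e) \<in> Eb}"
    define G' where "G' = (V, E')"
    have indf: "P_ind_free H G'"
      unfolding G'_def E'_def V_def E\<Gamma>_def
      by (rule indfree[where G = G and cb = cb]) (use colour' c'T \<sigma> finT G(3,4) Eb_def in
          \<open>auto simp: V_def E\<Gamma>_def\<close>)
    have gG': "graph G'" unfolding G'_def graph_def E'_def using finV E\<Gamma> by auto
    have sG': "subgraph_of G' \<Gamma>" unfolding G'_def subgraph_of_def E'_def V_def E\<Gamma>_def by auto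
    have E'split: "E' = Ew \<union> K \<sigma>" "Ew \<inter> K \<sigma> = {}"
      unfolding E'_def Ew_def K_def Ec_def by auto
    have cardE': "card E' = card Ew + card (K \<sigma>)"
      using E'split finE card_Un_disjoint[of Ew "K \<sigma>"] unfolding Ew_def K_def Ec_def by simp
    have cardEG: "card E\<Gamma> = card Ew + card Ec"
    proof -
      have "E\<Gamma> = Ew \<union> Ec" "Ew \<inter> Ec = {}" unfolding Ew_def Ec_def by auto
      thus ?thesis using finE card_Un_disjoint[of Ew Ec] unfolding Ew_def Ec_def by simp
    qed
    define SP where "SP = {num_edges G | G. graph G \<and> subgraph_of G \<Gamma> \<and> P_ind_free H G}"
    have "SP \<subseteq> {..card E\<Gamma>}"
    proof
      fix x assume "x \<in> SP"
      then obtain G0 where G0: "x = num_edges G0" "subgraph_of G0 \<Gamma>" unfolding SP_def by blast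
      have "card (edges G0) \<le> card E\<Gamma>" using G0 finE unfolding subgraph_of_def E\<Gamma>_def
        by (simp add: card_mono)
      thus "x \<in> {..card E\<Gamma>}" using G0 unfolding num_edges_def by simp
    qed
    hence finSP: "finite SP" by (rule finite_subset) simp
    have "card E' \<in> SP" unfolding SP_def using gG' sG' indf
      by (metis (mono_tags, lifting) G'_def mem_Collect_eq num_edges_def snd_conv)
    hence exb: "card E' \<le> ex_prop \<Gamma> (P_ind_free H)"
      unfolding ex_prop_def SP_def[symmetric] using finSP by (simp add: le_cSup_finite)
    have a1: "card Ew * eb \<le> card Ew * C" using ebC by simp
    have a2: "card E\<Gamma> * eb = card Ew * eb + card Ec * eb" by (simp add: cardEG add_mult_distrib)
    have a3: "card E' * C = card Ew * C + card (K \<sigma>) * C" by (simp add: cardE' add_mult_distrib)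
    have nat1: "card E\<Gamma> * eb \<le> card E' * C" using a1 a2 a3 K\<sigma> by linarith
    have "card E\<Gamma> * m \<le> card E\<Gamma> * (2 * eb)" using m_eb by simp
    hence nat2: "card E\<Gamma> * m \<le> 2 * (card E' * C)" using nat1 by linarith
    have "real (card E\<Gamma>) * real m \<le> 2 * (real (card E') * real C)"
      using nat2 by (metis of_nat_le_iff of_nat_mult of_nat_numeral)
    hence "(1/2) * real (card E\<Gamma>) * real m / real C \<le> real (card E')"
      using C0 by (simp add: field_simps)
    also have "\<dots> \<le> real (ex_prop \<Gamma> (P_ind_free H))" using exb by simp
    finally show ?thesis
      unfolding k_def[symmetric] m_def[symmetric] C_def[symmetric] num_edges_def E\<Gamma>_def[symmetric] .
  qed
qed


end
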